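(* The VC-density of the edge relation on the class $\mathcal H$ of all Hamming graphs is $2$.
   Context: For $d,q\in\mathbb N$ and a set $S$ with $|S|=q$, the Hamming graph $H(d,q)$ has vertex set $S^d$, two vertices adjacent iff they agree in all but exactly one coordinate; $\mathcal H=\{H(d,q)\mid d,q\in\mathbb N\}$. For a graph $G$, the edge relation set system is $(V(G),\mathcal S_G)$ with $\mathcal S_G=\{N(v)\mid v\in V(G)\}$ ($N(v)$ the set of neighbours of $v$). Its shatter function is $\pi_G(n)=\max\{|\{S\cap A\mid S\in\mathcal S_G\}| : A\subseteq V(G), |A|=n\}$. For a class $\mathcal C$ of graphs, $\pi_{\mathcal C}(n)=\max\{\pi_G(n)\mid G\in\mathcal C\}$, the VC-dimension of the edge relation on $\mathcal C$ is the supremum over $G\in\mathcal C$ of the largest size of a set $A$ with $\{A\cap S\mid S\in\mathcal S_G\}=\mathcal P(A)$, and the VC-density of the edge relation on $\mathcal C$ is $\inf\{r\in\mathbb R^+ : \pi_{\mathcal C}(n)\in\mathcal O(n^r)\}$ if that VC-dimension is finite, and $\infty$ otherwise. *)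

theory Defs
  imports Complex_Main "HOL-Library.Landau_Symbols" "HOL-Library.Extended_Real"
begin

definition hamming_vertices :: "nat \<Rightarrow> nat \<Rightarrow> nat list set" where
  "hamming_vertices d q = {xs. length xs = d \<and> set xs \<subseteq> {0..<q}}"

definition hamming_adj :: "nat list \<Rightarrow> nat list \<Rightarrow> bool" where
  "hamming_adj u v \<longleftrightarrow> length u = length v \<and> card {i. i < length u \<and> u ! i \<noteq> v ! i} = 1"

definition nbhd :: "'a set \<Rightarrow> ('a \<Rightarrow> 'a \<Rightarrow> bool) \<Rightarrow> 'a \<Rightarrow> 'a set" where
  "nbhd V adj v = {w \<in> V. adj v w}"

definition edge_set_system :: "'a set \<Rightarrow> ('a \<Rightarrow> 'a \<Rightarrow> bool) \<Rightarrow> 'a set set" where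
  "edge_set_system V adj = {nbhd V adj v | v. v \<in> V}"

definition traces :: "'a set \<Rightarrow> ('a \<Rightarrow> 'a \<Rightarrow> bool) \<Rightarrow> 'a set \<Rightarrow> 'a set set" where
  "traces V adj A = {S \<inter> A | S. S \<in> edge_set_system V adj}"

definition hamming_shatter :: "nat \<Rightarrow> nat" where
  "hamming_shatter n = Sup {card (traces (hamming_vertices d q) hamming_adj A) | d q A.
       A \<subseteq> hamming_vertices d q \<and> card A = n}"

definition hamming_vcdim_finite :: bool where
  "hamming_vcdim_finite \<longleftrightarrow> (\<exists>k::nat. \<forall>d q A. A \<subseteq> hamming_vertices d q \<and>
       traces (hamming_vertices d q) hamming_adj A = Pow A \<longrightarrow> card A \<le> k)"

definition hamming_vc_density :: ereal where
  "hamming_vc_density = (if hamming_vcdim_finite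
      then Inf (ereal ` {r::real. r > 0 \<and>
              (\<lambda>n. real (hamming_shatter n)) \<in> O(\<lambda>n. real n powr r)})
      else \<infinity>)"

end

theory Submission
  imports Defs
begin


lemma adj_iff:
  "hamming_adj u v \<longleftrightarrow> length u = length v \<and>
     (\<exists>p<length u. u!p \<noteq> v!p \<and> (\<forall>j<length u. j \<noteq> p \<longrightarrow> u!j = v!j))"
proof -
  have "card {i. i < length u \<and> u ! i \<noteq> v ! i} = 1 \<longleftrightarrow>
     (\<exists>p<length u. u!p \<noteq> v!p \<and> (\<forall>j<length u. j \<noteq> p \<longrightarrow> u!j = v!j))"
    (is "card ?S = 1 \<longleftrightarrow> _")
  proof
    assume "card ?S = 1"
    then obtain p where "?S = {p}" by (auto simp: card_1_singleton_iff)
    then show "\<exists>p<length u. u!p \<noteq> v!p \<and> (\<forall>j<length u. j \<noteq> p \<longrightarrow> u!j = v!j)"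
      by (intro exI[of _ p]) (auto simp: set_eq_iff)
  next
    assume "\<exists>p<length u. u!p \<noteq> v!p \<and> (\<forall>j<length u. j \<noteq> p \<longrightarrow> u!j = v!j)"
    then obtain p where "p<length u" "u!p \<noteq> v!p" "\<forall>j<length u. j \<noteq> p \<longrightarrow> u!j = v!j" by blast
    then have "?S = {p}" by auto
    then show "card ?S = 1" by simp
  qed
  then show ?thesis unfolding hamming_adj_def by blast
qed

lemma adj_sym: "hamming_adj u v \<Longrightarrow> hamming_adj v u"
  unfolding adj_iff by (metis)

lemma adj_irrefl: "\<not> hamming_adj u u"
  unfolding adj_iff by auto

lemma adj_neq: "hamming_adj u v \<Longrightarrow> u \<noteq> v"
  using adj_irrefl by blast

lemma cn_card:
  assumes "x \<noteq> y" "\<not> hamming_adj x y"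
  shows "card {v. hamming_adj v x \<and> hamming_adj v y} \<le> 2 \<and> finite {v. hamming_adj v x \<and> hamming_adj v y}"
proof (cases "{v. hamming_adj v x \<and> hamming_adj v y} = {}")
  case True then show ?thesis by (simp only: True) simp
next
  case False
  then obtain v0 where v0: "hamming_adj v0 x" "hamming_adj v0 y" by blast
  obtain p0 where p0: "p0 < length v0" "v0!p0 \<noteq> x!p0" "\<forall>j<length v0. j \<noteq> p0 \<longrightarrow> v0!j = x!j"
    using v0(1) unfolding adj_iff by blast
  obtain p1 where p1: "p1 < length v0" "v0!p1 \<noteq> y!p1" "\<forall>j<length v0. j \<noteq> p1 \<longrightarrow> v0!j = y!j"
    using v0(2) unfolding adj_iff by blast
  have lx: "length x = length v0" and ly: "length y = length v0" using v0 unfolding adj_iff by auto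
  have "{v. hamming_adj v x \<and> hamming_adj v y} \<subseteq> (\<lambda>p. x[p := y!p]) ` {p0, p1}"
  proof
    fix v assume "v \<in> {v. hamming_adj v x \<and> hamming_adj v y}"
    then have v: "hamming_adj v x" "hamming_adj v y" by auto
    obtain p where p: "p < length v" "v!p \<noteq> x!p" "\<forall>j<length v. j \<noteq> p \<longrightarrow> v!j = x!j"
      using v(1) unfolding adj_iff by blast
    obtain p' where p': "p' < length v" "v!p' \<noteq> y!p'" "\<forall>j<length v. j \<noteq> p' \<longrightarrow> v!j = y!j"
      using v(2) unfolding adj_iff by blast
    have lv: "length v = length v0" using v lx unfolding adj_iff by auto
    have pp: "p \<noteq> p'"
    proof
      assume "p = p'"
      have "\<forall>j<length x. j \<noteq> p \<longrightarrow> x!j = y!j" using p p' \<open>p = p'\<close> lv lx by auto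
      moreover have "x!p \<noteq> y!p"
      proof
        assume "x!p = y!p"
        then have "x = y" using \<open>\<forall>j<length x. j \<noteq> p \<longrightarrow> x!j = y!j\<close> lx ly
          by (metis nth_equalityI)
        with assms show False by simp
      qed
      ultimately have "hamming_adj x y" unfolding adj_iff using lx ly lv p by auto
      with assms show False by simp
    qed
    have vx: "v = x[p := y!p]"
      by (rule nth_equalityI) (use lv lx ly p p' pp in \<open>auto simp: nth_list_update\<close>)
    have "p \<in> {p0, p1}"
    proof (rule ccontr)
      assume "p \<notin> {p0,p1}"
      then have "v0!p = x!p" "v0!p = y!p" using p0 p1 p lv by auto
      then have "x!p = y!p" by simp
      moreover have "x!p \<noteq> y!p" using p p' pp by auto
      ultimately show False by simp
    qed
    then show "v \<in> (\<lambda>p. x[p := y!p]) ` {p0, p1}" using vx by blast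
  qed
  moreover have "card ((\<lambda>p. x[p := y!p]) ` {p0, p1}) \<le> 2"
    by (rule order_trans[OF card_image_le]) (auto simp: card_insert_if)
  ultimately show ?thesis by (meson card_mono finite.emptyI finite.insertI finite_imageI finite_subset order_trans)
qed

definition line :: "nat list \<Rightarrow> nat list \<Rightarrow> nat list set" where
  "line x y = {w. length w = length x \<and> (\<forall>j<length x. x!j = y!j \<longrightarrow> w!j = x!j)}"

lemma line_a:
  assumes "hamming_adj x y" "hamming_adj w x" "hamming_adj w y"
  shows "w \<in> line x y"
proof -
  obtain i where i: "i < length x" "x!i \<noteq> y!i" "\<forall>j<length x. j \<noteq> i \<longrightarrow> x!j = y!j"
    using assms(1) unfolding adj_iff by blast
  obtain p where p: "p < length w" "w!p \<noteq> x!p" "\<forall>j<length w. j \<noteq> p \<longrightarrow> w!j = x!j"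
    using assms(2) unfolding adj_iff by blast
  obtain p' where p': "p' < length w" "w!p' \<noteq> y!p'" "\<forall>j<length w. j \<noteq> p' \<longrightarrow> w!j = y!j"
    using assms(3) unfolding adj_iff by blast
  have l: "length w = length x" using assms unfolding adj_iff by auto
  have "p = i"
  proof (rule ccontr)
    assume "p \<noteq> i"
    then have "w!i = x!i" using p i l by auto
    then have "p' = i" using p' i l by (metis)
    then show False using p p' i l \<open>p \<noteq> i\<close> by metis
  qed
  then show ?thesis unfolding line_def using p i l by auto
qed

lemma line_b:
  assumes "hamming_adj x y" "w \<in> line x y" "w' \<in> line x y" "w \<noteq> w'"
  shows "hamming_adj w w'"
proof -
  obtain i where i: "i < length x" "x!i \<noteq> y!i" "\<forall>j<length x. j \<noteq> i \<longrightarrow> x!j = y!j"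
    using assms(1) unfolding adj_iff by blast
  have l: "length w = length x" "length w' = length x" using assms unfolding line_def by auto
  have agree: "\<forall>j<length w. j \<noteq> i \<longrightarrow> w!j = w'!j" using assms(2,3) i l unfolding line_def by auto
  have "w!i \<noteq> w'!i" using agree l assms(4) by (metis nth_equalityI)
  then show ?thesis unfolding adj_iff using l i agree by auto
qed

lemma line_eq:
  assumes "hamming_adj x y" "v \<in> line x y" "v \<noteq> x"
  shows "line x v = line x y"
proof -
  obtain i where i: "i < length x" "x!i \<noteq> y!i" "\<forall>j<length x. j \<noteq> i \<longrightarrow> x!j = y!j"
    using assms(1) unfolding adj_iff by blast
  have lv: "length v = length x" and vj: "\<forall>j<length x. x!j = y!j \<longrightarrow> v!j = x!j"
    using assms(2) unfolding line_def by auto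
  have "x!i \<noteq> v!i"
  proof
    assume "x!i = v!i"
    then have "v = x" using vj i lv by (metis nth_equalityI)
    with assms(3) show False by simp
  qed
  have "\<forall>j<length x. (x!j = v!j) = (x!j = y!j)"
  proof (intro allI impI)
    fix j assume j: "j < length x"
    show "(x!j = v!j) = (x!j = y!j)"
    proof (cases "j = i")
      case True then show ?thesis using i \<open>x!i \<noteq> v!i\<close> by simp
    next
      case False then show ?thesis using i vj j by auto
    qed
  qed
  then show ?thesis unfolding line_def by auto
qed

lemma x_in_line: "x \<in> line x y" unfolding line_def by auto
lemma y_in_line: "length y = length x \<Longrightarrow> y \<in> line x y" unfolding line_def by auto

lemma traces_bound:
  assumes AV: "A \<subseteq> hamming_vertices d q" and fA: "finite A"
  shows "card (traces (hamming_vertices d q) hamming_adj A) \<le> 1 + card A + 4 * card A ^ 2"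
proof -
  let ?V = "hamming_vertices d q"
  define G where "G x y = (\<lambda>v. {w\<in>A. hamming_adj v w}) ` {v. hamming_adj v x \<and> hamming_adj v y \<and> x \<noteq> y \<and> \<not> hamming_adj x y}" for x y
  define F where "F x y = {A \<inter> line x y, A \<inter> line x y - {y}} \<union> G x y" for x y
  have tr: "traces ?V hamming_adj A = (\<lambda>v. {w\<in>A. hamming_adj v w}) ` ?V"
    unfolding traces_def edge_set_system_def nbhd_def using AV by auto
  have sub: "traces ?V hamming_adj A \<subseteq> {{}} \<union> (\<lambda>a. {a}) ` A \<union> (\<Union>p\<in>A\<times>A. F (fst p) (snd p))"
  proof
    fix T assume "T \<in> traces ?V hamming_adj A"
    then obtain v where vV: "v \<in> ?V" and T: "T = {w\<in>A. hamming_adj v w}" using tr by auto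
    show "T \<in> {{}} \<union> (\<lambda>a. {a}) ` A \<union> (\<Union>p\<in>A\<times>A. F (fst p) (snd p))"
    proof (cases "\<exists>x\<in>T. \<exists>y\<in>T. x \<noteq> y")
      case False
      then have "T = {} \<or> (\<exists>a\<in>A. T = {a})" using T by blast
      then show ?thesis by blast
    next
      case True
      then obtain x y where xy: "x \<in> T" "y \<in> T" "x \<noteq> y" by blast
      show ?thesis
      proof (cases "\<exists>x\<in>T. \<exists>y\<in>T. x \<noteq> y \<and> \<not> hamming_adj x y")
        case True
        then obtain x y where xy: "x \<in> T" "y \<in> T" "x \<noteq> y" "\<not> hamming_adj x y" by blast
        have "T \<in> G x y" unfolding G_def using xy T adj_sym by blast
        then have "T \<in> F x y" unfolding F_def by blast
        moreover have "(x,y) \<in> A\<times>A" using xy T by auto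
        ultimately have "T \<in> (\<Union>p\<in>A\<times>A. F (fst p) (snd p))" by (intro UN_I[of "(x,y)"]) simp_all
        then show ?thesis by blast
      next
        case False
        then have cl: "\<And>a b. a \<in> T \<Longrightarrow> b \<in> T \<Longrightarrow> a \<noteq> b \<Longrightarrow> hamming_adj a b" by blast
        have axy: "hamming_adj x y" using cl xy by blast
        have vx: "hamming_adj v x" "hamming_adj v y" using xy T by auto
        have vl: "v \<in> line x y" by (rule line_a[OF axy vx(1) vx(2)])
        have lxy: "length y = length x" using axy unfolding adj_iff by auto
        have Teq: "T = A \<inter> line x y - {v}"
        proof
          show "T \<subseteq> A \<inter> line x y - {v}"
          proof
            fix w assume w: "w \<in> T"
            then have wA: "w \<in> A" and vw: "hamming_adj v w" using T by auto
            have "w \<in> line x y"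
            proof (cases "w = x \<or> w = y")
              case True then show ?thesis using x_in_line y_in_line lxy by blast
            next
              case False
              then have "hamming_adj w x" "hamming_adj w y" using cl w xy by auto
              then show ?thesis by (rule line_a[OF axy])
            qed
            then show "w \<in> A \<inter> line x y - {v}" using wA vw adj_neq by blast
          qed
        next
          show "A \<inter> line x y - {v} \<subseteq> T"
          proof
            fix w assume "w \<in> A \<inter> line x y - {v}"
            then have "w \<in> A" "w \<in> line x y" "w \<noteq> v" by auto
            then have "hamming_adj v w" using line_b[OF axy vl \<open>w \<in> line x y\<close>] by blast
            then show "w \<in> T" using T \<open>w \<in> A\<close> by blast
          qed
        qed
        show ?thesis
        proof (cases "v \<in> A")
          case False
          then have "T = A \<inter> line x y" using Teq by blast
          then have "T \<in> F x y" unfolding F_def by blast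
          moreover have "(x,y) \<in> A\<times>A" using xy T by auto
        ultimately have "T \<in> (\<Union>p\<in>A\<times>A. F (fst p) (snd p))" by (intro UN_I[of "(x,y)"]) simp_all
        then show ?thesis by blast
        next
          case True
          have "v \<noteq> x" using vx adj_neq by blast
          then have "line x v = line x y" using line_eq[OF axy vl] by blast
          then have "T = A \<inter> line x v - {v}" using Teq by simp
          then have "T \<in> F x v" unfolding F_def by blast
          moreover have "(x,v) \<in> A\<times>A" using xy T True by auto
        ultimately have "T \<in> (\<Union>p\<in>A\<times>A. F (fst p) (snd p))" by (intro UN_I[of "(x,v)"]) simp_all
        then show ?thesis by blast
        qed
      qed
    qed
  qed
  have Gc: "card (G x y) \<le> 2" for x y
  proof (cases "x \<noteq> y \<and> \<not> hamming_adj x y")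
    case True
    then have "{v. hamming_adj v x \<and> hamming_adj v y \<and> x \<noteq> y \<and> \<not> hamming_adj x y} = {v. hamming_adj v x \<and> hamming_adj v y}" by auto
    then have "G x y = (\<lambda>v. {w\<in>A. hamming_adj v w}) ` {v. hamming_adj v x \<and> hamming_adj v y}"
      unfolding G_def by simp
    moreover have cn: "card {v. hamming_adj v x \<and> hamming_adj v y} \<le> 2 \<and> finite {v. hamming_adj v x \<and> hamming_adj v y}"
      using cn_card True by blast
    ultimately show ?thesis using card_image_le[of "{v. hamming_adj v x \<and> hamming_adj v y}" "\<lambda>v. {w\<in>A. hamming_adj v w}"]
      by (metis (no_types, lifting) le_trans)
  next
    case False
    then have "G x y = {}" unfolding G_def by blast
    then show ?thesis by simp
  qed
  have Fc: "card (F x y) \<le> 4" for x y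
  proof -
    have "card (F x y) \<le> card {A \<inter> line x y, A \<inter> line x y - {y}} + card (G x y)"
      unfolding F_def by (rule card_Un_le)
    also have "card {A \<inter> line x y, A \<inter> line x y - {y}} \<le> 2" by (simp add: card_insert_if)
    finally show ?thesis using Gc[of x y] by linarith
  qed
  have "card (\<Union>p\<in>A\<times>A. F (fst p) (snd p)) \<le> (\<Sum>p\<in>A\<times>A. card (F (fst p) (snd p)))"
    by (rule card_UN_le) (simp add: fA)
  also have "\<dots> \<le> (\<Sum>p\<in>A\<times>A. 4)" by (intro sum_mono) (use Fc in blast)
  also have "\<dots> = 4 * card A ^ 2" by (simp add: card_cartesian_product power2_eq_square)
  finally have c3: "card (\<Union>p\<in>A\<times>A. F (fst p) (snd p)) \<le> 4 * card A ^ 2" .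
  have fin: "finite ({{}} \<union> (\<lambda>a. {a}) ` A \<union> (\<Union>p\<in>A\<times>A. F (fst p) (snd p)))"
  proof -
    have "{{}} \<union> (\<lambda>a. {a}) ` A \<union> (\<Union>p\<in>A\<times>A. F (fst p) (snd p)) \<subseteq> Pow A"
      unfolding F_def G_def by auto
    then show ?thesis using fA by (meson finite_Pow_iff finite_subset)
  qed
  have e1: "card (traces ?V hamming_adj A) \<le> card ({{}} \<union> (\<lambda>a. {a}) ` A \<union> (\<Union>p\<in>A\<times>A. F (fst p) (snd p)))"
    by (rule card_mono[OF fin sub])
  have e2: "card ({{}} \<union> (\<lambda>a. {a}) ` A \<union> (\<Union>p\<in>A\<times>A. F (fst p) (snd p))) \<le> card ({{}} \<union> (\<lambda>a. {a}) ` A) + card (\<Union>p\<in>A\<times>A. F (fst p) (snd p))"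
    by (rule card_Un_le)
  have e3: "card ({{}} \<union> (\<lambda>a. {a}) ` A) \<le> card {{}::nat list set} + card ((\<lambda>a. {a}) ` A)"
    by (rule card_Un_le)
  have e4: "card ((\<lambda>a. {a}) ` A) \<le> card A" by (rule card_image_le[OF fA])
  show ?thesis using e1 e2 e3 e4 c3 by simp
qed


lemma finite_V: "finite (hamming_vertices d q)"
proof -
  have "hamming_vertices d q = {xs. set xs \<subseteq> {0..<q} \<and> length xs = d}"
    unfolding hamming_vertices_def by auto
  then show ?thesis using finite_lists_length_eq[OF finite_atLeastLessThan] by simp
qed

lemma traces_eq: "A \<subseteq> hamming_vertices d q \<Longrightarrow>
  traces (hamming_vertices d q) hamming_adj A = (\<lambda>v. {w\<in>A. hamming_adj v w}) ` hamming_vertices d q"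
  unfolding traces_def edge_set_system_def nbhd_def by auto

lemma shatter_le: "hamming_shatter n \<le> 1 + n + 4 * n ^ 2"
proof -
  let ?X = "{card (traces (hamming_vertices d q) hamming_adj A) | d q A.
       A \<subseteq> hamming_vertices d q \<and> card A = n}"
  have b: "x \<le> 1 + n + 4 * n ^ 2" if xX: "x \<in> ?X" for x
  proof -
    obtain d q A where "x = card (traces (hamming_vertices d q) hamming_adj A)"
      "A \<subseteq> hamming_vertices d q" "card A = n" using xX by blast
    then show ?thesis using traces_bound[of A d q] finite_V[of d q] finite_subset by blast
  qed
  show ?thesis
  proof (cases "?X = {}")
    case True then show ?thesis unfolding hamming_shatter_def by (simp only: True) simp
  next
    case False then show ?thesis unfolding hamming_shatter_def by (rule cSup_least) (rule b)
  qed
qed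

lemma bdd_X: "bdd_above {card (traces (hamming_vertices d q) hamming_adj A) | d q A.
       A \<subseteq> hamming_vertices d q \<and> card A = n}"
proof (rule bdd_aboveI)
  fix x assume "x \<in> {card (traces (hamming_vertices d q) hamming_adj A) | d q A.
       A \<subseteq> hamming_vertices d q \<and> card A = n}"
  then obtain d q A where "x = card (traces (hamming_vertices d q) hamming_adj A)"
      "A \<subseteq> hamming_vertices d q" "card A = n" by blast
  then show "x \<le> 1 + n + 4 * n ^ 2" using traces_bound[of A d q] finite_V[of d q] finite_subset by blast
qed

lemma ex2S: "(\<exists>p<Suc (Suc 0). P p) \<longleftrightarrow> P 0 \<or> P (Suc 0)"
  using less_2_cases[unfolded numeral_2_eq_2] by blast
lemma all2S: "(\<forall>p<Suc (Suc 0). P p) \<longleftrightarrow> P 0 \<and> P (Suc 0)"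
  using less_2_cases[unfolded numeral_2_eq_2] by blast
lemma adj2: "hamming_adj [a,b] [c,e] \<longleftrightarrow> (a \<noteq> c \<and> b = e) \<or> (a = c \<and> b \<noteq> e)"
  unfolding adj_iff by (simp only: ex2S all2S length_Cons list.size nth_Cons_0 nth_Cons_Suc) auto

lemma traces_Pow: "traces V adj A \<subseteq> Pow A"
  unfolding traces_def by auto

lemma shatter_ge: "m ^ 2 \<le> hamming_shatter (2 * m)"
proof -
  define A where "A = (\<lambda>i. [i,0::nat]) ` {1..m} \<union> (\<lambda>j. [0,j]) ` {1..m}"
  let ?V = "hamming_vertices 2 (m+1)"
  have AV: "A \<subseteq> ?V" unfolding A_def hamming_vertices_def by auto
  have cA: "card A = 2 * m"
  proof -
    have "card A = card ((\<lambda>i. [i,0::nat]) ` {1..m}) + card ((\<lambda>j. [0::nat,j]) ` {1..m})"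
      unfolding A_def by (rule card_Un_disjoint) auto
    also have "card ((\<lambda>i. [i,0::nat]) ` {1..m}) = m" by (subst card_image) (auto simp: inj_on_def)
    also have "card ((\<lambda>j. [0::nat,j]) ` {1..m}) = m" by (subst card_image) (auto simp: inj_on_def)
    finally show ?thesis by simp
  qed
  have tr: "(\<lambda>p. {[fst p,0], [0, snd p]}) ` ({1..m}\<times>{1..m}) \<subseteq> traces ?V hamming_adj A"
  proof
    fix T assume "T \<in> (\<lambda>p. {[fst p,0], [0, snd p]}) ` ({1..m}\<times>{1..m})"
    then obtain i j where ij: "i \<in> {1..m}" "j \<in> {1..m}" "T = {[i,0],[0,j]}" by auto
    have "{w\<in>A. hamming_adj [i,j] w} = {w \<in> (\<lambda>k. [k,0::nat]) ` {1..m}. hamming_adj [i,j] w} \<union> {w \<in> (\<lambda>k. [0::nat,k]) ` {1..m}. hamming_adj [i,j] w}"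
      unfolding A_def by blast
    also have "{w \<in> (\<lambda>k. [k,0::nat]) ` {1..m}. hamming_adj [i,j] w} = {[i,0]}"
      using ij by (auto simp: adj2)
    also have "{w \<in> (\<lambda>k. [0::nat,k]) ` {1..m}. hamming_adj [i,j] w} = {[0,j]}"
      using ij by (auto simp: adj2)
    finally have eqT: "{w\<in>A. hamming_adj [i,j] w} = {[i,0],[0,j]}" by (simp add: insert_commute)
    have ijV: "[i,j] \<in> ?V" using ij unfolding hamming_vertices_def by auto
    have Tij: "T = (\<lambda>v. {w\<in>A. hamming_adj v w}) [i,j]" using ij(3) eqT by simp
    show "T \<in> traces ?V hamming_adj A" unfolding traces_eq[OF AV] using Tij ijV by blast
  qed
  have inj: "inj_on (\<lambda>p. {[fst p,0::nat], [0, snd p]}) ({1..m}\<times>{1..m})"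
    unfolding inj_on_def by (auto simp: doubleton_eq_iff)
  have "m ^ 2 = card ((\<lambda>p. {[fst p,0::nat], [0, snd p]}) ` ({1..m}\<times>{1..m}))"
    unfolding card_image[OF inj] card_cartesian_product by (simp add: power2_eq_square)
  also have "\<dots> \<le> card (traces ?V hamming_adj A)"
    by (rule card_mono[OF _ tr]) (rule finite_subset[OF traces_Pow], simp add: A_def)
  also have "\<dots> \<le> hamming_shatter (2 * m)"
    unfolding hamming_shatter_def by (rule cSup_upper[OF _ bdd_X]) (use AV cA in blast)
  finally show ?thesis .
qed



lemma pow_big: "n \<ge> 9 \<Longrightarrow> 1 + n + 4 * n ^ 2 < (2::nat) ^ n"
proof (induction n rule: nat_induct_at_least)
  case base then show ?case by simp
next
  case (Suc n)
  have sq: "Suc n ^ 2 = n ^ 2 + 2 * n + 1" by (simp add: power2_eq_square)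
  have "9 * n \<le> n * n" using Suc(1) by simp
  then have "8 * n + 5 \<le> 1 + n + 4 * n ^ 2" unfolding power2_eq_square using Suc(1) by linarith
  then show ?case using Suc(2) sq by simp
qed

lemma vc_finite: hamming_vcdim_finite
  unfolding hamming_vcdim_finite_def
proof (intro exI[of _ 8] allI impI)
  fix d q A assume h: "A \<subseteq> hamming_vertices d q \<and> traces (hamming_vertices d q) hamming_adj A = Pow A"
  have fA: "finite A" by (rule finite_subset[OF _ finite_V]) (use h in blast)
  have e1: "card (Pow A) = (2::nat) ^ card A" using fA by (rule card_Pow)
  have e2: "card (traces (hamming_vertices d q) hamming_adj A) \<le> 1 + card A + 4 * card A ^ 2"
    using h fA by (intro traces_bound) auto
  have le: "(2::nat) ^ card A \<le> 1 + card A + 4 * card A ^ 2" proof -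
    have "traces (hamming_vertices d q) hamming_adj A = Pow A" using h by blast
    then show ?thesis using e1 e2 by simp
  qed
  show "card A \<le> 8" proof (rule ccontr)
    assume "\<not> card A \<le> 8"
    then have "1 + card A + 4 * card A ^ 2 < 2 ^ card A" by (intro pow_big) simp
    with \<open>2 ^ card A \<le> 1 + card A + 4 * card A ^ 2\<close> show False by simp
  qed
qed

lemma two_in: "(\<lambda>n. real (hamming_shatter n)) \<in> O(\<lambda>n. real n powr 2)"
proof (rule bigoI[of _ 6])
  show "\<forall>\<^sub>F n in sequentially. norm (real (hamming_shatter n)) \<le> 6 * norm (real n powr 2)"
    unfolding eventually_sequentially
  proof (intro exI[of _ 1] allI impI)
    fix n :: nat assume n: "1 \<le> n"
    have "hamming_shatter n \<le> 1 + n + 4 * n ^ 2" by (rule shatter_le)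
    also have "\<dots> \<le> 6 * n ^ 2"
    proof -
      have "n \<le> n * n" using n by simp
      then show ?thesis unfolding power2_eq_square using n by linarith
    qed
    finally have h6: "hamming_shatter n \<le> 6 * n ^ 2" .
    have "real (hamming_shatter n) \<le> real (6 * n ^ 2)" using h6 by (rule of_nat_mono)
    then have "real (hamming_shatter n) \<le> 6 * real n ^ 2" by simp
    then show "norm (real (hamming_shatter n)) \<le> 6 * norm (real n powr 2)" by simp
  qed
qed

lemma ge2:
  assumes "(\<lambda>n. real (hamming_shatter n)) \<in> O(\<lambda>n. real n powr r)"
  shows "r \<ge> 2"
proof (rule ccontr)
  assume "\<not> r \<ge> 2"
  then have r2: "r < 2" by simp
  let ?g = "\<lambda>m::nat. real (2 * m)"
  have lim2: "filterlim (\<lambda>m::nat. 2 * m) at_top sequentially" by (rule mult_nat_left_at_top) simp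
  have limg: "filterlim ?g at_top sequentially"
    by (rule filterlim_compose[OF filterlim_real_sequentially lim2])
  have c1: "(\<lambda>m. real (hamming_shatter (2 * m))) \<in> O(\<lambda>m. ?g m powr r)"
    using landau_o.big.compose[OF assms lim2] by simp
  have c2: "(\<lambda>m. ?g m powr 2) \<in> O(\<lambda>m. real (hamming_shatter (2 * m)))"
  proof (rule bigoI[of _ 4])
    show "\<forall>\<^sub>F m in sequentially. norm (?g m powr 2) \<le> 4 * norm (real (hamming_shatter (2 * m)))"
    proof (rule always_eventually, intro allI)
      fix m :: nat
      have msq: "m ^ 2 \<le> hamming_shatter (2 * m)" by (rule shatter_ge)
      have "real (m ^ 2) \<le> real (hamming_shatter (2 * m))" using msq by (rule of_nat_mono)
      then have le: "real m ^ 2 \<le> real (hamming_shatter (2 * m))" by simp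
      have e: "?g m powr 2 = 4 * real m ^ 2" by (simp add: power2_eq_square)
      have "\<bar>?g m powr 2\<bar> = ?g m powr 2" by simp
      then show "norm (?g m powr 2) \<le> 4 * norm (real (hamming_shatter (2 * m)))"
        using e le by simp
    qed
  qed
  have c3': "(\<lambda>m. ?g m powr r) \<in> o(\<lambda>m. ?g m powr 2) \<longleftrightarrow> r < 2"
    by (rule powr_smallo_iff[OF limg trivial_limit_sequentially])
  have c3: "(\<lambda>m. ?g m powr r) \<in> o(\<lambda>m. ?g m powr 2)"
    by (rule iffD2[OF c3' r2])
  have "(\<lambda>m. ?g m powr 2) \<in> O(\<lambda>m. ?g m powr r)" by (rule landau_o.big_trans[OF c2 c1])
  from landau_o.big_small_asymmetric[OF this c3]
  have "\<forall>\<^sub>F m in sequentially. ?g m powr 2 = 0" .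
  then obtain N where N: "\<And>m. m \<ge> N \<Longrightarrow> ?g m powr 2 = 0" unfolding eventually_sequentially by blast
  have "?g (N+1) powr 2 = 0" by (rule N) simp
  moreover have "?g (N+1) powr 2 > 0" by simp
  ultimately show False by linarith
qed

theorem mainTheorem18:
  shows "hamming_vc_density = 2"
proof -
  let ?S = "{r::real. r > 0 \<and> (\<lambda>n. real (hamming_shatter n)) \<in> O(\<lambda>n. real n powr r)}"
  have inS: "2 \<in> ?S" using two_in by simp
  have lb: "\<And>r. r \<in> ?S \<Longrightarrow> 2 \<le> r" using ge2 by blast
  have "Inf (ereal ` ?S) = ereal 2"
  proof (rule antisym)
    show "Inf (ereal ` ?S) \<le> ereal 2" by (rule Inf_lower) (use inS in blast)
    show "ereal 2 \<le> Inf (ereal ` ?S)" by (rule Inf_greatest) (use lb in auto)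
  qed
  then show ?thesis unfolding hamming_vc_density_def using vc_finite by simp
qed

end
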